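(* Let $G$ be a finite connected $\gamma$-doubling graph and let $\varepsilon>0$. Then Algorithm 1 (with any ranking) has, within $O(\gamma^{\lceil\log_2\frac{2}{\varepsilon}\rceil+1})$ one-to-all distance queries (or at its termination if it terminates earlier), selected a node $u$ with $e(u)\le(1+\varepsilon)\operatorname{rad}(G)$; and Algorithm 3 has, within $O(\gamma^{\lceil\log_2\frac{2}{\varepsilon}\rceil+1})$ one-to-all distance queries (or at its termination if earlier), selected a node $u$ with $e(u)\ge(1-\varepsilon)\operatorname{diam}(G)$. The $O(\cdot)$ hides an absolute constant.
   Context: $G$ is undirected, unweighted, connected with node set $V$; $d$ shortest-path distance; $e(u)=\max_v d(u,v)$; $\operatorname{rad}(G)=\min_u e(u)$, $\operatorname{diam}(G)=\max_u e(u)$; $B[u,\rho]=\{v:d(u,v)\le\rho\}$. $G$ is $\gamma$-doubling if every ball $B[u,\rho]$ is included in the union of at most $\gamma$ balls of radius $\rho/2$. A ranking $r$ is an injective map $V\to$ totally ordered set; $A_r(u)$ is the node $v$ maximizing $(d(u,v),r(v))$ lexicographically. A one-to-all distance query from $x$ computes $(d(x,v))_v$. $e_L(v)=\max_{x\in L}d(v,x)$ ($0$ if $L=\emptyset$), $e^U(v)=\min_{x\in U}(d(v,x)+e(x))$ ($+\infty$ if $U=\emptyset$). Algorithm 1: $L=K=\emptyset$; repeat: select $u$ with $e_L(u)$ minimal; query from $u$, compute $e(u)$; if $e(u)=e_L(u)$ halt outputting $u$; else query from $a=A_r(u)$, add $u$ to $K$, $a$ to $L$; then halt (outputting $c\in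 K$ of minimum eccentricity) if $\min_v e_L(v)\ge\min_{w\in K}e(w)$. Algorithm 3: $U=K=\emptyset$; repeat: select $u$ with $e^U(u)$ maximal; query from $u$, compute $e(u)$, add $u$ to $K$; choose any $x$ with $d(u,x)+e(x)=e(u)$ (e.g. $x=u$), query from $x$, add $x$ to $U$; stop when $\max_{w\in K}e(w)\ge\max_v e^U(v)$. "Selected" means chosen as $u$ in some iteration. *)

theory Defs
  imports "HOL-Analysis.Analysis"
begin

definition is_graph :: "nat set \<Rightarrow> (nat \<Rightarrow> nat \<Rightarrow> bool) \<Rightarrow> bool" where
  "is_graph V E \<longleftrightarrow> finite V \<and> V \<noteq> {} \<and> (\<forall>x y. E x y \<longrightarrow> x \<in> V \<and> y \<in> V)
     \<and> (\<forall>x y. E x y \<longrightarrow> E y x) \<and> (\<forall>x. \<not> E x x)"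

definition connected_graph :: "nat set \<Rightarrow> (nat \<Rightarrow> nat \<Rightarrow> bool) \<Rightarrow> bool" where
  "connected_graph V E \<longleftrightarrow> (\<forall>u\<in>V. \<forall>v\<in>V. \<exists>xs. xs \<noteq> [] \<and> hd xs = u \<and> last xs = v \<and> successively E xs)"

definition gdist :: "(nat \<Rightarrow> nat \<Rightarrow> bool) \<Rightarrow> nat \<Rightarrow> nat \<Rightarrow> nat" where
  "gdist E u v = (LEAST n. \<exists>xs. length xs = Suc n \<and> hd xs = u \<and> last xs = v \<and> successively E xs)"

definition ecc :: "nat set \<Rightarrow> (nat \<Rightarrow> nat \<Rightarrow> bool) \<Rightarrow> nat \<Rightarrow> nat" where
  "ecc V E u = Max (gdist E u ` V)"

definition rad :: "nat set \<Rightarrow> (nat \<Rightarrow> nat \<Rightarrow> bool) \<Rightarrow> nat" where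
  "rad V E = Min (ecc V E ` V)"

definition diam :: "nat set \<Rightarrow> (nat \<Rightarrow> nat \<Rightarrow> bool) \<Rightarrow> nat" where
  "diam V E = Max (ecc V E ` V)"

definition cball_g :: "nat set \<Rightarrow> (nat \<Rightarrow> nat \<Rightarrow> bool) \<Rightarrow> nat \<Rightarrow> real \<Rightarrow> nat set" where
  "cball_g V E u \<rho> = {v \<in> V. real (gdist E u v) \<le> \<rho>}"

definition doubling :: "nat set \<Rightarrow> (nat \<Rightarrow> nat \<Rightarrow> bool) \<Rightarrow> nat \<Rightarrow> bool" where
  "doubling V E \<gamma> \<longleftrightarrow> (\<forall>u\<in>V. \<forall>\<rho>::real. \<exists>C. C \<subseteq> V \<and> card C \<le> \<gamma> \<and>
      cball_g V E u \<rho> \<subseteq> (\<Union>c\<in>C. cball_g V E c (\<rho> / 2)))"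

definition is_antipode :: "nat set \<Rightarrow> (nat \<Rightarrow> nat \<Rightarrow> bool) \<Rightarrow> (nat \<Rightarrow> nat) \<Rightarrow> nat \<Rightarrow> nat \<Rightarrow> bool" where
  "is_antipode V E r u a \<longleftrightarrow> a \<in> V \<and> (\<forall>w\<in>V. gdist E u w < gdist E u a \<or>
      (gdist E u w = gdist E u a \<and> r w \<le> r a))"

definition eL :: "(nat \<Rightarrow> nat \<Rightarrow> bool) \<Rightarrow> nat set \<Rightarrow> nat \<Rightarrow> nat" where
  "eL E L v = (if L = {} then 0 else Max (gdist E v ` L))"

definition eU :: "nat set \<Rightarrow> (nat \<Rightarrow> nat \<Rightarrow> bool) \<Rightarrow> nat set \<Rightarrow> nat \<Rightarrow> ereal" where
  "eU V E U v = (if U = {} then \<infinity> else ereal (real (Min ((\<lambda>x. gdist E v x + ecc V E x) ` U))))"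

text \<open>Execution prefixes of Algorithm 1. alg1 V E r L K us q h: after some iterations
  the sets are L, K, the selected nodes (in order) are us, q queries have been made,
  and h says whether the algorithm has halted.\<close>
inductive alg1 :: "nat set \<Rightarrow> (nat \<Rightarrow> nat \<Rightarrow> bool) \<Rightarrow> (nat \<Rightarrow> nat) \<Rightarrow>
    nat set \<Rightarrow> nat set \<Rightarrow> nat list \<Rightarrow> nat \<Rightarrow> bool \<Rightarrow> bool"
  for V E r where
  init: "alg1 V E r {} {} [] 0 False"
| halt: "\<lbrakk>alg1 V E r L K us q False; u \<in> V; \<forall>v\<in>V. eL E L u \<le> eL E L v;
          ecc V E u = eL E L u\<rbrakk> \<Longrightarrow> alg1 V E r L K (us @ [u]) (q + 1) True"
| step: "\<lbrakk>alg1 V E r L K us q False; u \<in> V; \<forall>v\<in>V. eL E L u \<le> eL E L v;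
          ecc V E u \<noteq> eL E L u; is_antipode V E r u a;
          h = (Min (eL E (insert a L) ` V) \<ge> Min (ecc V E ` insert u K))\<rbrakk>
        \<Longrightarrow> alg1 V E r (insert a L) (insert u K) (us @ [u]) (q + 2) h"

text \<open>Execution prefixes of Algorithm 3 (x is any node with d(u,x)+e(x)=e(u)).\<close>
inductive alg3 :: "nat set \<Rightarrow> (nat \<Rightarrow> nat \<Rightarrow> bool) \<Rightarrow>
    nat set \<Rightarrow> nat set \<Rightarrow> nat list \<Rightarrow> nat \<Rightarrow> bool \<Rightarrow> bool"
  for V E where
  init: "alg3 V E {} {} [] 0 False"
| step: "\<lbrakk>alg3 V E U K us q False; u \<in> V; \<forall>v\<in>V. eU V E U v \<le> eU V E U u;
          x \<in> V; gdist E u x + ecc V E x = ecc V E u;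
          h = (ereal (real (Max (ecc V E ` insert u K))) \<ge> Max (eU V E (insert x U) ` V))\<rbrakk>
        \<Longrightarrow> alg3 V E (insert x U) (insert u K) (us @ [u]) (q + 2) h"

end

theory Submission
  imports Defs
begin

lemma walk_ex:
  assumes "connected_graph V E" "u \<in> V" "v \<in> V"
  shows "\<exists>xs. length xs = Suc (gdist E u v) \<and> hd xs = u \<and> last xs = v \<and> successively E xs"
proof -
  from assms obtain xs where xs: "xs \<noteq> []" "hd xs = u" "last xs = v" "successively E xs"
    unfolding connected_graph_def by blast
  hence "\<exists>n xs. length xs = Suc n \<and> hd xs = u \<and> last xs = v \<and> successively E xs"
    by (intro exI[of _ "length xs - 1"] exI[of _ xs]) auto
  thus ?thesis unfolding gdist_def by (rule LeastI_ex)
qed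

lemma gdist_le:
  "length xs = Suc n \<Longrightarrow> hd xs = u \<Longrightarrow> last xs = v \<Longrightarrow> successively E xs \<Longrightarrow> gdist E u v \<le> n"
  unfolding gdist_def by (rule Least_le) blast

lemma gdist_refl: "gdist E u u = 0"
  using gdist_le[of "[u]" 0 u u E] by simp

lemma gdist_sym_le:
  assumes "is_graph V E" "connected_graph V E" "u \<in> V" "v \<in> V"
  shows "gdist E v u \<le> gdist E u v"
proof -
  obtain xs where xs: "length xs = Suc (gdist E u v)" "hd xs = u" "last xs = v" "successively E xs"
    using walk_ex[OF assms(2-4)] by blast
  have ne: "xs \<noteq> []" using xs(1) by auto
  have sym: "\<And>x y. E x y \<Longrightarrow> E y x" using assms(1) unfolding is_graph_def by blast
  have "successively (\<lambda>x y. E y x) xs"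
    using xs(4) by (rule successively_mono) (use sym in blast)
  hence "successively E (rev xs)" by simp
  moreover have "hd (rev xs) = v" "last (rev xs) = u" using ne xs by (auto simp: hd_rev last_rev)
  ultimately show ?thesis using xs(1) by (intro gdist_le[of "rev xs"]) auto
qed

lemma gdist_sym:
  assumes "is_graph V E" "connected_graph V E" "u \<in> V" "v \<in> V"
  shows "gdist E u v = gdist E v u"
  using gdist_sym_le[OF assms] gdist_sym_le[OF assms(1,2,4,3)] by simp

lemma gdist_tri:
  assumes "connected_graph V E" "u \<in> V" "v \<in> V" "w \<in> V"
  shows "gdist E u w \<le> gdist E u v + gdist E v w"
proof -
  obtain xs where xs: "length xs = Suc (gdist E u v)" "hd xs = u" "last xs = v" "successively E xs"
    using walk_ex[OF assms(1-3)] by blast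
  obtain ys where ys: "length ys = Suc (gdist E v w)" "hd ys = v" "last ys = w" "successively E ys"
    using walk_ex[OF assms(1,3,4)] by blast
  then obtain ys' where ys': "ys = v # ys'" by (cases ys) auto
  have ne: "xs \<noteq> []" using xs(1) by auto
  have s: "successively E (xs @ ys')"
    using xs(3,4) ys(4) ys' by (cases ys') (auto simp: successively_append_iff successively_Cons)
  have l: "last (xs @ ys') = w" using xs ys ys' by (cases ys' rule: rev_cases) auto
  have h: "hd (xs @ ys') = u" using ne xs by simp
  show ?thesis using gdist_le[OF _ h l s] xs(1) ys(1) ys' by simp
qed


lemma fin: "is_graph V E \<Longrightarrow> finite V" and ne: "is_graph V E \<Longrightarrow> V \<noteq> {}"
  unfolding is_graph_def by auto

lemma gdist_le_ecc: "is_graph V E \<Longrightarrow> v \<in> V \<Longrightarrow> gdist E u v \<le> ecc V E u"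
  unfolding ecc_def using fin by (intro Max_ge) auto

lemma ecc_attained: "is_graph V E \<Longrightarrow> \<exists>v\<in>V. gdist E u v = ecc V E u"
proof -
  assume "is_graph V E"
  hence "Max (gdist E u ` V) \<in> gdist E u ` V" using fin[of V E] ne[of V E] by (intro Max_in) auto
  thus ?thesis unfolding ecc_def by force
qed

lemma rad_attained: "is_graph V E \<Longrightarrow> \<exists>c\<in>V. ecc V E c = rad V E"
proof -
  assume "is_graph V E"
  hence "Min (ecc V E ` V) \<in> ecc V E ` V" using fin[of V E] ne[of V E] by (intro Min_in) auto
  thus ?thesis unfolding rad_def by force
qed

lemma rad_le: "is_graph V E \<Longrightarrow> v \<in> V \<Longrightarrow> rad V E \<le> ecc V E v"
  unfolding rad_def using fin by (intro Min_le) auto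

lemma diam_attained: "is_graph V E \<Longrightarrow> \<exists>c\<in>V. ecc V E c = diam V E"
proof -
  assume "is_graph V E"
  hence "Max (ecc V E ` V) \<in> ecc V E ` V" using fin[of V E] ne[of V E] by (intro Max_in) auto
  thus ?thesis unfolding diam_def by force
qed

lemma ecc_le_diam: "is_graph V E \<Longrightarrow> v \<in> V \<Longrightarrow> ecc V E v \<le> diam V E"
  unfolding diam_def using fin by (intro Max_ge) auto

lemma gdist_le_eL: "finite L \<Longrightarrow> v \<in> L \<Longrightarrow> gdist E u v \<le> eL E L u"
  unfolding eL_def by (auto intro: Max_ge)

lemma eL_le_ecc: "is_graph V E \<Longrightarrow> L \<subseteq> V \<Longrightarrow> eL E L u \<le> ecc V E u"
  unfolding eL_def ecc_def using fin[of V E]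
  by (auto intro!: Max_mono finite_subset[of L V])

lemma ecc_tri:
  assumes "is_graph V E" "connected_graph V E" "z \<in> V" "x \<in> V"
  shows "ecc V E z \<le> gdist E z x + ecc V E x"
proof -
  obtain v where v: "v \<in> V" "gdist E z v = ecc V E z" using ecc_attained[OF assms(1)] by blast
  have "gdist E z v \<le> gdist E z x + gdist E x v" using gdist_tri assms v by blast
  also have "\<dots> \<le> gdist E z x + ecc V E x" using gdist_le_ecc[OF assms(1) v(1)] by simp
  finally show ?thesis using v by simp
qed

lemma eU_ge:
  assumes "is_graph V E" "connected_graph V E" "z \<in> V" "U \<subseteq> V"
  shows "ereal (real (ecc V E z)) \<le> eU V E U z"
proof (cases "U = {}")
  case True thus ?thesis unfolding eU_def by simp
next
  case False
  have fU: "finite U" using finite_subset[OF assms(4) fin[OF assms(1)]] .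
  have "ecc V E z \<le> Min ((\<lambda>x. gdist E z x + ecc V E x) ` U)"
    using fU False ecc_tri[OF assms(1-3)] assms(4) by (subst Min_ge_iff) auto
  thus ?thesis using False unfolding eU_def by simp
qed

lemma eU_le:
  assumes "finite U" "x \<in> U"
  shows "eU V E U v \<le> ereal (real (gdist E v x + ecc V E x))"
proof -
  have "Min ((\<lambda>x. gdist E v x + ecc V E x) ` U) \<le> gdist E v x + ecc V E x"
    using assms by (intro Min_le) auto
  hence "real (Min ((\<lambda>x. gdist E v x + ecc V E x) ` U)) \<le> real (gdist E v x + ecc V E x)"
    by (rule of_nat_mono)
  moreover have "U \<noteq> {}" using assms by auto
  ultimately show ?thesis unfolding eU_def by (simp only: if_False ereal_less_eq(3))
qed

lemma cover:
  assumes "is_graph V E" "doubling V E \<gamma>" "a \<in> V"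
  shows "\<exists>C. C \<subseteq> V \<and> finite C \<and> card C \<le> \<gamma>^k \<and>
           cball_g V E a R \<subseteq> (\<Union>c\<in>C. cball_g V E c (R / 2^k))"
proof (induction k)
  case 0
  show ?case using assms(3) by (intro exI[of _ "{a}"]) auto
next
  case (Suc k)
  then obtain C where C: "C \<subseteq> V" "finite C" "card C \<le> \<gamma>^k"
    "cball_g V E a R \<subseteq> (\<Union>c\<in>C. cball_g V E c (R / 2^k))" by blast
  have "\<forall>c\<in>C. \<exists>D. D \<subseteq> V \<and> card D \<le> \<gamma> \<and>
      cball_g V E c (R / 2^k) \<subseteq> (\<Union>d\<in>D. cball_g V E d (R / 2^k / 2))"
    using assms(2) C(1) unfolding doubling_def by blast
  then obtain f where f: "\<And>c. c \<in> C \<Longrightarrow> f c \<subseteq> V \<and> card (f c) \<le> \<gamma> \<and>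
      cball_g V E c (R / 2^k) \<subseteq> (\<Union>d\<in>f c. cball_g V E d (R / 2^k / 2))"
    by metis
  define C' where "C' = (\<Union>c\<in>C. f c)"
  have sub: "C' \<subseteq> V" using f unfolding C'_def by blast
  have fin': "finite C'" using finite_subset[OF sub fin[OF assms(1)]] .
  have "card C' \<le> (\<Sum>c\<in>C. card (f c))" unfolding C'_def using C(2) by (rule card_UN_le)
  also have "\<dots> \<le> card C * \<gamma>" using f sum_bounded_above[of C "\<lambda>c. card (f c)" \<gamma>] by auto
  also have "\<dots> \<le> \<gamma>^k * \<gamma>" using C(3) by simp
  finally have cC: "card C' \<le> \<gamma>^Suc k" by (simp add: mult.commute)
  have "cball_g V E a R \<subseteq> (\<Union>d\<in>C'. cball_g V E d (R / 2^Suc k))"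
  proof
    fix v assume "v \<in> cball_g V E a R"
    then obtain c where c: "c \<in> C" "v \<in> cball_g V E c (R / 2^k)" using C(4) by blast
    then obtain d where "d \<in> f c" "v \<in> cball_g V E d (R / 2^k / 2)" using f[OF c(1)] by blast
    moreover have "R / 2^k / 2 = R / 2^Suc k" by simp
    ultimately have "v \<in> cball_g V E d (R / 2^Suc k)" by metis
    thus "v \<in> (\<Union>d\<in>C'. cball_g V E d (R / 2^Suc k))" using c(1) \<open>d \<in> f c\<close> unfolding C'_def
      by blast
  qed
  with sub fin' cC have "C' \<subseteq> V \<and> finite C' \<and> card C' \<le> \<gamma>^Suc k \<and>
      cball_g V E a R \<subseteq> (\<Union>d\<in>C'. cball_g V E d (R / 2^Suc k))" by (intro conjI)
  thus ?case by (rule exI)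
qed

lemma packing:
  assumes G: "is_graph V E" "connected_graph V E" and D: "doubling V E \<gamma>" and a: "a \<in> V"
    and pV: "\<And>i. i < n \<Longrightarrow> p i \<in> V"
    and pa: "\<And>i. i < n \<Longrightarrow> real (gdist E a (p i)) \<le> R"
    and sep: "\<And>i j. i < j \<Longrightarrow> j < n \<Longrightarrow> real (gdist E (p i) (p j)) > \<delta>"
    and k: "2 * (R / 2^k) \<le> \<delta>"
  shows "n \<le> \<gamma>^k"
proof -
  obtain C where C: "C \<subseteq> V" "finite C" "card C \<le> \<gamma>^k"
    "cball_g V E a R \<subseteq> (\<Union>c\<in>C. cball_g V E c (R / 2^k))" using cover[OF G(1) D a, where k=k and R=R] by auto
  define \<rho> where "\<rho> = R / 2^k"
  have ex: "\<exists>c. c \<in> C \<and> p i \<in> cball_g V E c \<rho>" if "i < n" for i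
  proof -
    have "p i \<in> cball_g V E a R" unfolding cball_g_def using pV[OF that] pa[OF that] by simp
    hence "p i \<in> (\<Union>c\<in>C. cball_g V E c \<rho>)" using C(4) unfolding \<rho>_def by blast
    thus ?thesis by blast
  qed
  define g where "g i = (SOME c. c \<in> C \<and> p i \<in> cball_g V E c \<rho>)" for i
  have g: "g i \<in> C \<and> p i \<in> cball_g V E (g i) \<rho>" if "i < n" for i
    unfolding g_def using someI_ex[OF ex[OF that]] .
  have close: "real (gdist E (p i) (p j)) \<le> \<delta>" if "i < n" "j < n" "g i = g j" for i j
  proof -
    let ?c = "g i"
    have cV: "?c \<in> V" using g[OF that(1)] C(1) by blast
    have "gdist E (p i) (p j) \<le> gdist E (p i) ?c + gdist E ?c (p j)"
      using gdist_tri[OF G(2) pV[OF that(1)] cV pV[OF that(2)]] .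
    also have "\<dots> = gdist E ?c (p i) + gdist E ?c (p j)"
      using gdist_sym[OF G pV[OF that(1)] cV] by simp
    finally have "real (gdist E (p i) (p j)) \<le> real (gdist E ?c (p i)) + real (gdist E ?c (p j))"
      by linarith
    also have "\<dots> \<le> 2 * \<rho>"
    proof -
      have "real (gdist E ?c (p i)) \<le> \<rho>" using g[OF that(1)] unfolding cball_g_def by blast
      moreover have "real (gdist E ?c (p j)) \<le> \<rho>" using g[OF that(2)] that(3) unfolding cball_g_def by simp
      ultimately show ?thesis by linarith
    qed
    finally show ?thesis using k unfolding \<rho>_def by linarith
  qed
  have "inj_on g {..<n}"
  proof (rule inj_onI)
    fix i j assume ij: "i \<in> {..<n}" "j \<in> {..<n}" "g i = g j"
    hence "i < n" "j < n" by auto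
    show "i = j"
    proof (rule ccontr)
      assume "i \<noteq> j"
      hence "i < j \<or> j < i" by arith
      thus False
      proof
        assume "i < j"
        have "real (gdist E (p i) (p j)) > \<delta>" using sep[OF \<open>i < j\<close> \<open>j < n\<close>] .
        moreover have "real (gdist E (p i) (p j)) \<le> \<delta>" using close[OF \<open>i < n\<close> \<open>j < n\<close> ij(3)] .
        ultimately show False by linarith
      next
        assume "j < i"
        have "real (gdist E (p j) (p i)) > \<delta>" using sep[OF \<open>j < i\<close> \<open>i < n\<close>] .
        moreover have "real (gdist E (p j) (p i)) \<le> \<delta>" using close[OF \<open>j < n\<close> \<open>i < n\<close> ij(3)[symmetric]] .
        ultimately show False by linarith
      qed
    qed
  qed
  moreover have "g ` {..<n} \<subseteq> C" using g by auto
  ultimately have "card {..<n} \<le> card C" using C(2) by (intro card_inj_on_le) auto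
  thus ?thesis using C(3) by simp
qed


lemma antipode_ecc:
  assumes "is_graph V E" "is_antipode V E r u a"
  shows "a \<in> V" "gdist E u a = ecc V E u"
proof -
  show aV: "a \<in> V" using assms(2) unfolding is_antipode_def by blast
  obtain v where v: "v \<in> V" "gdist E u v = ecc V E u" using ecc_attained[OF assms(1)] by blast
  have "gdist E u v \<le> gdist E u a" using assms(2) v(1) unfolding is_antipode_def by fastforce
  thus "gdist E u a = ecc V E u" using v gdist_le_ecc[OF assms(1) aV, of u] by simp
qed

lemma alg1_inv:
  assumes G: "is_graph V E" "connected_graph V E"
  shows "alg1 V E r L K us q h \<Longrightarrow> q \<le> 2 * length us \<and> set us \<subseteq> V \<and> L \<subseteq> V \<and> K \<subseteq> set us \<and>
     (h \<longrightarrow> (\<exists>u\<in>set us. ecc V E u \<le> rad V E)) \<and>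
     (\<not> h \<longrightarrow> (\<exists>as. length as = length us \<and> set as = L \<and>
        (\<forall>i<length us. gdist E (us!i) (as!i) = ecc V E (us!i)) \<and>
        (\<forall>i j. i < j \<longrightarrow> j < length us \<longrightarrow> gdist E (us!j) (as!i) \<le> rad V E)))"
proof (induction rule: alg1.induct)
  case init thus ?case by simp
next
  case (halt L K us q u)
  obtain c where c: "c \<in> V" "ecc V E c = rad V E" using rad_attained[OF G(1)] by blast
  have LV: "L \<subseteq> V" using halt.IH by blast
  have "eL E L u \<le> eL E L c" using halt.hyps(3) c(1) by blast
  also have "\<dots> \<le> ecc V E c" using eL_le_ecc[OF G(1) LV] .
  finally have "ecc V E u \<le> rad V E" using halt.hyps(4) c(2) by simp
  thus ?case using halt.IH halt.hyps(2) by auto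
next
  case (step L K us q u a h)
  obtain c where c: "c \<in> V" "ecc V E c = rad V E" using rad_attained[OF G(1)] by blast
  have LV: "L \<subseteq> V" and KU: "K \<subseteq> set us" and UV: "set us \<subseteq> V" using step.IH by blast+
  have aV: "a \<in> V" and da: "gdist E u a = ecc V E u" using antipode_ecc[OF G(1) step.hyps(5)] by auto
  have finL: "finite L" using finite_subset[OF LV fin[OF G(1)]] .
  have uR: "eL E L u \<le> rad V E"
  proof -
    have "eL E L u \<le> eL E L c" using step.hyps(3) c(1) by blast
    also have "\<dots> \<le> ecc V E c" using eL_le_ecc[OF G(1) LV] .
    finally show ?thesis using c(2) by simp
  qed
  have hpart: "h \<longrightarrow> (\<exists>w\<in>set (us @ [u]). ecc V E w \<le> rad V E)"
  proof
    assume h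
    have fK: "finite (insert u K)" using KU by (simp add: finite_subset)
    have "Min (eL E (insert a L) ` V) \<le> eL E (insert a L) c" using fin[OF G(1)] c(1) by (intro Min_le) auto
    also have "\<dots> \<le> ecc V E c" using eL_le_ecc[OF G(1)] LV aV by blast
    finally have m: "Min (ecc V E ` insert u K) \<le> rad V E" using \<open>h\<close> step.hyps(6) c(2) by simp
    have "Min (ecc V E ` insert u K) \<in> ecc V E ` insert u K" using fK by (intro Min_in) auto
    then obtain w where "w \<in> insert u K" "ecc V E w = Min (ecc V E ` insert u K)" by (metis (no_types, lifting) imageE)
    thus "\<exists>w\<in>set (us @ [u]). ecc V E w \<le> rad V E" using m KU by (intro bexI[of _ w]) auto
  qed
  have npart: "\<not> h \<longrightarrow> (\<exists>as. length as = length (us @ [u]) \<and> set as = insert a L \<and>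
        (\<forall>i<length (us @ [u]). gdist E ((us @ [u])!i) (as!i) = ecc V E ((us @ [u])!i)) \<and>
        (\<forall>i j. i < j \<longrightarrow> j < length (us @ [u]) \<longrightarrow> gdist E ((us @ [u])!j) (as!i) \<le> rad V E))"
  proof
    assume "\<not> h"
    obtain as where as: "length as = length us" "set as = L"
        "\<forall>i<length us. gdist E (us!i) (as!i) = ecc V E (us!i)"
        "\<forall>i j. i < j \<longrightarrow> j < length us \<longrightarrow> gdist E (us!j) (as!i) \<le> rad V E"
      using step.IH by blast
    have A: "\<forall>i<length (us @ [u]). gdist E ((us @ [u])!i) ((as @ [a])!i) = ecc V E ((us @ [u])!i)"
    proof (intro allI impI)
      fix i assume "i < length (us @ [u])"
      hence "i < length us \<or> i = length us" by auto
      thus "gdist E ((us @ [u])!i) ((as @ [a])!i) = ecc V E ((us @ [u])!i)"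
        using as(1,3) da by (auto simp: nth_append)
    qed
    have B: "\<forall>i j. i < j \<longrightarrow> j < length (us @ [u]) \<longrightarrow> gdist E ((us @ [u])!j) ((as @ [a])!i) \<le> rad V E"
    proof (intro allI impI)
      fix i j assume ij: "i < j" "j < length (us @ [u])"
      show "gdist E ((us @ [u])!j) ((as @ [a])!i) \<le> rad V E"
      proof (cases "j < length us")
        case True thus ?thesis using as(1,4) ij by (auto simp: nth_append)
      next
        case False
        hence j: "j = length us" using ij by auto
        have iL: "as ! i \<in> L" using as(1,2) ij j by auto
        have "gdist E u (as ! i) \<le> eL E L u" using gdist_le_eL[OF finL iL] .
        thus ?thesis using uR j ij as(1) by (auto simp: nth_append)
      qed
    qed
    show "\<exists>as. length as = length (us @ [u]) \<and> set as = insert a L \<and>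
        (\<forall>i<length (us @ [u]). gdist E ((us @ [u])!i) (as!i) = ecc V E ((us @ [u])!i)) \<and>
        (\<forall>i j. i < j \<longrightarrow> j < length (us @ [u]) \<longrightarrow> gdist E ((us @ [u])!j) (as!i) \<le> rad V E)"
      using A B as(1,2) by (intro exI[of _ "as @ [a]"]) auto
  qed
  show ?case using step.IH step.hyps(2) aV hpart npart by auto
qed


lemma alg3_inv:
  assumes G: "is_graph V E" "connected_graph V E"
  shows "alg3 V E U K us q h \<Longrightarrow> q = 2 * length us \<and> set us \<subseteq> V \<and> U \<subseteq> V \<and> K \<subseteq> set us \<and>
     (h \<longrightarrow> (\<exists>u\<in>set us. diam V E \<le> ecc V E u)) \<and>
     (\<not> h \<longrightarrow> (\<exists>xs. length xs = length us \<and> set xs = U \<and>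
        (\<forall>i<length us. gdist E (us!i) (xs!i) + ecc V E (xs!i) = ecc V E (us!i)) \<and>
        (\<forall>i j. i < j \<longrightarrow> j < length us \<longrightarrow> diam V E \<le> gdist E (us!j) (xs!i) + ecc V E (xs!i))))"
proof (induction rule: alg3.induct)
  case init thus ?case by simp
next
  case (step U K us q u x h)
  obtain z where z: "z \<in> V" "ecc V E z = diam V E" using diam_attained[OF G(1)] by blast
  have UV: "U \<subseteq> V" and KU: "K \<subseteq> set us" and usV: "set us \<subseteq> V" using step.IH by blast+
  have finU: "finite U" using finite_subset[OF UV fin[OF G(1)]] .
  have uD: "ereal (real (diam V E)) \<le> eU V E U u"
    using eU_ge[OF G z(1) UV] step.hyps(3) z by (metis order_trans)
  have hpart: "h \<longrightarrow> (\<exists>w\<in>set (us @ [u]). diam V E \<le> ecc V E w)"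
  proof
    assume h
    have fK: "finite (insert u K)" using KU by (simp add: finite_subset)
    have UV': "insert x U \<subseteq> V" using UV step.hyps(4) by blast
    have "ereal (real (diam V E)) \<le> eU V E (insert x U) z" using eU_ge[OF G z(1) UV'] z(2) by simp
    also have "\<dots> \<le> Max (eU V E (insert x U) ` V)" using fin[OF G(1)] z(1) by (intro Max_ge) auto
    also have "\<dots> \<le> ereal (real (Max (ecc V E ` insert u K)))" using \<open>h\<close> step.hyps(6) by simp
    finally have m: "diam V E \<le> Max (ecc V E ` insert u K)" by simp
    have "Max (ecc V E ` insert u K) \<in> ecc V E ` insert u K" using fK by (intro Max_in) auto
    then obtain w where "w \<in> insert u K" "ecc V E w = Max (ecc V E ` insert u K)"
      by (metis (no_types, lifting) imageE)
    thus "\<exists>w\<in>set (us @ [u]). diam V E \<le> ecc V E w" using m KU by (intro bexI[of _ w]) auto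
  qed
  have npart: "\<not> h \<longrightarrow> (\<exists>xs. length xs = length (us @ [u]) \<and> set xs = insert x U \<and>
        (\<forall>i<length (us @ [u]). gdist E ((us @ [u])!i) (xs!i) + ecc V E (xs!i) = ecc V E ((us @ [u])!i)) \<and>
        (\<forall>i j. i < j \<longrightarrow> j < length (us @ [u]) \<longrightarrow> diam V E \<le> gdist E ((us @ [u])!j) (xs!i) + ecc V E (xs!i)))"
  proof
    assume "\<not> h"
    obtain xs where xs: "length xs = length us" "set xs = U"
        "\<forall>i<length us. gdist E (us!i) (xs!i) + ecc V E (xs!i) = ecc V E (us!i)"
        "\<forall>i j. i < j \<longrightarrow> j < length us \<longrightarrow> diam V E \<le> gdist E (us!j) (xs!i) + ecc V E (xs!i)"
      using step.IH by blast
    have A: "\<forall>i<length (us @ [u]). gdist E ((us @ [u])!i) ((xs @ [x])!i) + ecc V E ((xs @ [x])!i) = ecc V E ((us @ [u])!i)"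
    proof (intro allI impI)
      fix i assume "i < length (us @ [u])"
      hence "i < length us \<or> i = length us" by auto
      thus "gdist E ((us @ [u])!i) ((xs @ [x])!i) + ecc V E ((xs @ [x])!i) = ecc V E ((us @ [u])!i)"
        using xs(1,3) step.hyps(5) by (auto simp: nth_append)
    qed
    have B: "\<forall>i j. i < j \<longrightarrow> j < length (us @ [u]) \<longrightarrow> diam V E \<le> gdist E ((us @ [u])!j) ((xs @ [x])!i) + ecc V E ((xs @ [x])!i)"
    proof (intro allI impI)
      fix i j assume ij: "i < j" "j < length (us @ [u])"
      show "diam V E \<le> gdist E ((us @ [u])!j) ((xs @ [x])!i) + ecc V E ((xs @ [x])!i)"
      proof (cases "j < length us")
        case True thus ?thesis using xs(1,4) ij by (auto simp: nth_append)
      next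
        case False
        hence j: "j = length us" using ij by auto
        have iU: "xs ! i \<in> U" using xs(1,2) ij j by auto
        have "eU V E U u \<le> ereal (real (gdist E u (xs ! i) + ecc V E (xs ! i)))" using eU_le[OF finU iU] .
        with uD have "diam V E \<le> gdist E u (xs ! i) + ecc V E (xs ! i)"
          by (metis ereal_less_eq(3) of_nat_le_iff order_trans)
        thus ?thesis using j ij xs(1) by (auto simp: nth_append)
      qed
    qed
    show "\<exists>xs. length xs = length (us @ [u]) \<and> set xs = insert x U \<and>
        (\<forall>i<length (us @ [u]). gdist E ((us @ [u])!i) (xs!i) + ecc V E (xs!i) = ecc V E ((us @ [u])!i)) \<and>
        (\<forall>i j. i < j \<longrightarrow> j < length (us @ [u]) \<longrightarrow> diam V E \<le> gdist E ((us @ [u])!j) (xs!i) + ecc V E (xs!i))"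
      using A B xs(1,2) by (intro exI[of _ "xs @ [x]"]) auto
  qed
  show ?case using step.IH step.hyps(2,4) hpart npart by auto
qed


lemma k_bound:
  assumes "\<epsilon> > (0::real)"
  shows "2 / 2 ^ (nat \<lceil>log 2 (2 / \<epsilon>)\<rceil>) \<le> \<epsilon>"
proof -
  define k where "k = nat \<lceil>log 2 (2 / \<epsilon>)\<rceil>"
  have "log 2 (2 / \<epsilon>) \<le> real k" unfolding k_def by linarith
  hence "2 powr (log 2 (2 / \<epsilon>)) \<le> 2 powr (real k)" by (intro powr_mono) auto
  hence "2 / \<epsilon> \<le> 2 ^ k" using assms by (simp add: powr_realpow)
  hence "2 \<le> 2 ^ k * \<epsilon>" using assms by (simp add: divide_le_eq)
  hence "2 / 2 ^ k \<le> \<epsilon>" by (simp add: divide_le_eq mult.commute)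
  thus ?thesis unfolding k_def .
qed

lemma gamma_pos:
  assumes "is_graph V E" "doubling V E \<gamma>"
  shows "1 \<le> \<gamma>"
proof -
  obtain u where u: "u \<in> V" using ne[OF assms(1)] by blast
  have "\<forall>\<rho>::real. \<exists>C. C \<subseteq> V \<and> card C \<le> \<gamma> \<and>
      cball_g V E u \<rho> \<subseteq> (\<Union>c\<in>C. cball_g V E c (\<rho> / 2))"
    using assms(2) u unfolding doubling_def by (rule bspec)
  from spec[OF this, of 0] obtain C where C: "C \<subseteq> V" "card C \<le> \<gamma>" "cball_g V E u 0 \<subseteq> (\<Union>c\<in>C. cball_g V E c (0 / 2))"
    by blast
  have "u \<in> cball_g V E u 0" using u unfolding cball_g_def by (simp add: gdist_refl)
  hence "C \<noteq> {}" using C(3) by blast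
  moreover have "finite C" using finite_subset[OF C(1) fin[OF assms(1)]] .
  ultimately have "card C \<ge> 1" by (simp add: Suc_le_eq card_gt_0_iff)
  thus ?thesis using C(2) by simp
qed

lemma alg1_bound:
  assumes G: "is_graph V E" "connected_graph V E" and D: "doubling V E \<gamma>" and e: "\<epsilon> > 0"
    and run: "alg1 V E r L K us q False"
    and bad: "\<forall>u\<in>set us. real (ecc V E u) > (1 + \<epsilon>) * real (rad V E)"
  shows "length us \<le> \<gamma> ^ (nat \<lceil>log 2 (2 / \<epsilon>)\<rceil>) + 1"
proof (cases "length us \<le> 1")
  case True thus ?thesis by simp
next
  case False
  define k where "k = nat \<lceil>log 2 (2 / \<epsilon>)\<rceil>"
  define R where "R = real (rad V E)"
  have inv: "set us \<subseteq> V" "L \<subseteq> V" using alg1_inv[OF G run] by auto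
  obtain as where as: "length as = length us" "set as = L"
        "\<forall>i<length us. gdist E (us!i) (as!i) = ecc V E (us!i)"
        "\<forall>i j. i < j \<longrightarrow> j < length us \<longrightarrow> gdist E (us!j) (as!i) \<le> rad V E"
    using alg1_inv[OF G run] by auto
  have asV: "as ! i \<in> V" if "i < length us" for i using as(1,2) inv(2) that by auto
  have usV: "us ! i \<in> V" if "i < length us" for i using inv(1) that by auto
  have R0: "R \<ge> 0" unfolding R_def by simp
  have "length us - 1 \<le> \<gamma> ^ k"
  proof (rule packing[OF G D asV[of 0], where p="\<lambda>i. us ! Suc i" and R=R and \<delta>="\<epsilon> * R"])
    show "0 < length us" using False by (cases us) auto
  next
    fix i assume i: "i < length us - 1"
    have I: "Suc i < length us" and ne0: "0 < length us" using i by auto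
    show "us ! Suc i \<in> V" using usV[OF I] .
    have "gdist E (as ! 0) (us ! Suc i) = gdist E (us ! Suc i) (as ! 0)"
      using gdist_sym[OF G asV[OF ne0] usV[OF I]] .
    also have "\<dots> \<le> rad V E" using as(4) I by simp
    finally show "real (gdist E (as ! 0) (us ! Suc i)) \<le> R" unfolding R_def by simp
  next
    fix i j assume ij: "i < j" "j < length us - 1"
    have I: "Suc i < length us" and J: "Suc j < length us" using ij by auto
    have "ecc V E (us ! Suc i) = gdist E (us ! Suc i) (as ! Suc i)" using as(3) I by simp
    also have "\<dots> \<le> gdist E (us ! Suc i) (us ! Suc j) + gdist E (us ! Suc j) (as ! Suc i)"
      using gdist_tri[OF G(2) usV[OF I] usV[OF J] asV[OF I]] .
    also have "\<dots> \<le> gdist E (us ! Suc i) (us ! Suc j) + rad V E" using as(4) ij J by simp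
    finally have "real (ecc V E (us ! Suc i)) \<le> real (gdist E (us ! Suc i) (us ! Suc j)) + R"
      unfolding R_def by linarith
    moreover have "real (ecc V E (us ! Suc i)) > (1 + \<epsilon>) * R" using bad I unfolding R_def by simp
    moreover have "(1 + \<epsilon>) * R = R + \<epsilon> * R" by (simp add: distrib_right)
    ultimately show "real (gdist E (us ! Suc i) (us ! Suc j)) > \<epsilon> * R" by linarith
  next
    have "2 / 2 ^ k \<le> \<epsilon>" using k_bound[OF e] unfolding k_def .
    hence "2 / 2 ^ k * R \<le> \<epsilon> * R" using R0 by (rule mult_right_mono)
    thus "2 * (R / 2 ^ k) \<le> \<epsilon> * R" by simp
  qed
  thus ?thesis unfolding k_def by linarith
qed

lemma alg3_bound:
  assumes G: "is_graph V E" "connected_graph V E" and D: "doubling V E \<gamma>" and e: "\<epsilon> > 0"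
    and run: "alg3 V E U K us q False"
    and bad: "\<forall>u\<in>set us. real (ecc V E u) < (1 - \<epsilon>) * real (diam V E)"
  shows "length us \<le> \<gamma> ^ (nat \<lceil>log 2 (2 / \<epsilon>)\<rceil>)"
proof (cases "length us = 0")
  case True thus ?thesis by simp
next
  case False
  define k where "k = nat \<lceil>log 2 (2 / \<epsilon>)\<rceil>"
  define R where "R = real (diam V E)"
  have inv: "set us \<subseteq> V" "U \<subseteq> V" using alg3_inv[OF G run] by auto
  obtain xs where xs: "length xs = length us" "set xs = U"
        "\<forall>i<length us. gdist E (us!i) (xs!i) + ecc V E (xs!i) = ecc V E (us!i)"
        "\<forall>i j. i < j \<longrightarrow> j < length us \<longrightarrow> diam V E \<le> gdist E (us!j) (xs!i) + ecc V E (xs!i)"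
    using alg3_inv[OF G run] by auto
  have xsV: "xs ! i \<in> V" if "i < length us" for i using xs(1,2) inv(2) that by auto
  have usV: "us ! i \<in> V" if "i < length us" for i using inv(1) that by auto
  have R0: "R \<ge> 0" unfolding R_def by simp
  have "length us \<le> \<gamma> ^ k"
  proof (rule packing[OF G D usV[of 0], where p="\<lambda>i. us ! i" and R=R and \<delta>="\<epsilon> * R"])
    show "0 < length us" using False by simp
  next
    fix i assume i: "i < length us"
    thus "us ! i \<in> V" using usV by simp
    have "gdist E (us ! 0) (us ! i) \<le> ecc V E (us ! 0)" using gdist_le_ecc[OF G(1) usV[OF i]] .
    also have "\<dots> \<le> diam V E" using ecc_le_diam[OF G(1) usV[of 0]] False by simp
    finally show "real (gdist E (us ! 0) (us ! i)) \<le> R" unfolding R_def by simp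
  next
    fix i j assume ij: "i < j" "j < length us"
    have I: "i < length us" using ij by auto
    have "diam V E \<le> gdist E (us!j) (xs!i) + ecc V E (xs!i)" using xs(4) ij by simp
    also have "\<dots> \<le> gdist E (us!j) (us!i) + gdist E (us!i) (xs!i) + ecc V E (xs!i)"
      using gdist_tri[OF G(2) usV[OF ij(2)] usV[OF I] xsV[OF I]] by simp
    also have "\<dots> = gdist E (us!i) (us!j) + ecc V E (us!i)"
      using xs(3) I gdist_sym[OF G usV[OF ij(2)] usV[OF I]] by simp
    finally have "R \<le> real (gdist E (us!i) (us!j)) + real (ecc V E (us!i))"
      unfolding R_def by linarith
    moreover have "real (ecc V E (us ! i)) < (1 - \<epsilon>) * R" using bad I unfolding R_def by simp
    moreover have "(1 - \<epsilon>) * R = R - \<epsilon> * R" by (simp add: left_diff_distrib)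
    ultimately show "real (gdist E (us ! i) (us ! j)) > \<epsilon> * R" by linarith
  next
    have "2 / 2 ^ k \<le> \<epsilon>" using k_bound[OF e] unfolding k_def .
    hence "2 / 2 ^ k * R \<le> \<epsilon> * R" using R0 by (rule mult_right_mono)
    thus "2 * (R / 2 ^ k) \<le> \<epsilon> * R" by simp
  qed
  thus ?thesis unfolding k_def .
qed


theorem proposition3:
  "\<exists>C::real. C > 0 \<and>
    (\<forall>V E (\<gamma>::nat) (\<epsilon>::real) (r::nat \<Rightarrow> nat).
       is_graph V E \<and> connected_graph V E \<and> doubling V E \<gamma> \<and> \<epsilon> > 0 \<and> inj_on r V \<longrightarrow>
       (\<forall>L K us q h. alg1 V E r L K us q h \<and>
            (h \<or> real q \<ge> C * real \<gamma> ^ (nat \<lceil>log 2 (2 / \<epsilon>)\<rceil> + 1)) \<longrightarrow>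
          (\<exists>u\<in>set us. real (ecc V E u) \<le> (1 + \<epsilon>) * real (rad V E))) \<and>
       (\<forall>U K us q h. alg3 V E U K us q h \<and>
            (h \<or> real q \<ge> C * real \<gamma> ^ (nat \<lceil>log 2 (2 / \<epsilon>)\<rceil> + 1)) \<longrightarrow>
          (\<exists>u\<in>set us. real (ecc V E u) \<ge> (1 - \<epsilon>) * real (diam V E))))"
proof (rule exI[of _ "6::real"], intro conjI)
  show "(6::real) > 0" by simp
  show "\<forall>V E (\<gamma>::nat) (\<epsilon>::real) (r::nat \<Rightarrow> nat).
       is_graph V E \<and> connected_graph V E \<and> doubling V E \<gamma> \<and> \<epsilon> > 0 \<and> inj_on r V \<longrightarrow>
       (\<forall>L K us q h. alg1 V E r L K us q h \<and>
            (h \<or> real q \<ge> 6 * real \<gamma> ^ (nat \<lceil>log 2 (2 / \<epsilon>)\<rceil> + 1)) \<longrightarrow>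
          (\<exists>u\<in>set us. real (ecc V E u) \<le> (1 + \<epsilon>) * real (rad V E))) \<and>
       (\<forall>U K us q h. alg3 V E U K us q h \<and>
            (h \<or> real q \<ge> 6 * real \<gamma> ^ (nat \<lceil>log 2 (2 / \<epsilon>)\<rceil> + 1)) \<longrightarrow>
          (\<exists>u\<in>set us. real (ecc V E u) \<ge> (1 - \<epsilon>) * real (diam V E)))"
  proof (intro allI impI)
    fix V E \<gamma> \<epsilon> r
    assume H: "is_graph V E \<and> connected_graph V E \<and> doubling V E \<gamma> \<and> (\<epsilon>::real) > 0 \<and> inj_on (r::nat\<Rightarrow>nat) V"
    hence G: "is_graph V E" "connected_graph V E" and D: "doubling V E \<gamma>" and e: "\<epsilon> > 0" by auto
    define k where "k = nat \<lceil>log 2 (2 / \<epsilon>)\<rceil>"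
    have g1: "1 \<le> real \<gamma>" using gamma_pos[OF G(1) D] by simp
    have pk: "1 \<le> real \<gamma> ^ k" using g1 by (rule one_le_power)
    have "real \<gamma> ^ k * 1 \<le> real \<gamma> ^ k * real \<gamma>" using g1 pk by (intro mult_left_mono) auto
    hence big: "real \<gamma> ^ k \<le> real \<gamma> ^ (k + 1)" by (simp add: mult.commute)
    have pw: "real (\<gamma> ^ k) = real \<gamma> ^ k" by simp
    show "(\<forall>L K us q h. alg1 V E r L K us q h \<and>
            (h \<or> real q \<ge> 6 * real \<gamma> ^ (nat \<lceil>log 2 (2 / \<epsilon>)\<rceil> + 1)) \<longrightarrow>
          (\<exists>u\<in>set us. real (ecc V E u) \<le> (1 + \<epsilon>) * real (rad V E))) \<and>
       (\<forall>U K us q h. alg3 V E U K us q h \<and>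
            (h \<or> real q \<ge> 6 * real \<gamma> ^ (nat \<lceil>log 2 (2 / \<epsilon>)\<rceil> + 1)) \<longrightarrow>
          (\<exists>u\<in>set us. real (ecc V E u) \<ge> (1 - \<epsilon>) * real (diam V E)))"
      unfolding k_def[symmetric]
    proof (intro conjI allI impI)
      fix L K us q h
      assume A: "alg1 V E r L K us q h \<and> (h \<or> 6 * real \<gamma> ^ (k + 1) \<le> real q)"
      have inv: "q \<le> 2 * length us" "h \<longrightarrow> (\<exists>u\<in>set us. ecc V E u \<le> rad V E)"
        using alg1_inv[OF G, of r L K us q h] A by auto
      have rr: "real (rad V E) \<le> (1 + \<epsilon>) * real (rad V E)" using e by (simp add: distrib_right)
      show "\<exists>u\<in>set us. real (ecc V E u) \<le> (1 + \<epsilon>) * real (rad V E)"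
      proof (cases h)
        case True
        then obtain u where "u \<in> set us" "ecc V E u \<le> rad V E" using inv(2) by blast
        thus ?thesis using rr by (intro bexI[of _ u]) (auto intro: order_trans)
      next
        case False
        show ?thesis
        proof (rule ccontr)
          assume "\<not> ?thesis"
          hence bad: "\<forall>u\<in>set us. real (ecc V E u) > (1 + \<epsilon>) * real (rad V E)" by (auto simp: not_le)
          have run: "alg1 V E r L K us q False" using A False by simp
          have "length us \<le> \<gamma> ^ k + 1" using alg1_bound[OF G D e run bad] unfolding k_def .
          hence "real (length us) \<le> real \<gamma> ^ k + 1" using pw by (metis of_nat_1 of_nat_add of_nat_mono)
          moreover have "real q \<le> 2 * real (length us)" using inv(1) by linarith
          moreover have "6 * real \<gamma> ^ (k + 1) \<le> real q" using A False by simp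
          ultimately show False using big pk by linarith
        qed
      qed
    next
      fix U K us q h
      assume A: "alg3 V E U K us q h \<and> (h \<or> 6 * real \<gamma> ^ (k + 1) \<le> real q)"
      have inv: "q = 2 * length us" "h \<longrightarrow> (\<exists>u\<in>set us. diam V E \<le> ecc V E u)"
        using alg3_inv[OF G, of U K us q h] A by auto
      have rr: "(1 - \<epsilon>) * real (diam V E) \<le> real (diam V E)" using e by (simp add: left_diff_distrib)
      show "\<exists>u\<in>set us. (1 - \<epsilon>) * real (diam V E) \<le> real (ecc V E u)"
      proof (cases h)
        case True
        then obtain u where "u \<in> set us" "diam V E \<le> ecc V E u" using inv(2) by blast
        thus ?thesis using rr by (intro bexI[of _ u]) (auto intro: order_trans)
      next
        case False
        show ?thesis
        proof (rule ccontr)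
          assume "\<not> ?thesis"
          hence bad: "\<forall>u\<in>set us. real (ecc V E u) < (1 - \<epsilon>) * real (diam V E)" by (auto simp: not_le)
          have run: "alg3 V E U K us q False" using A False by simp
          have "length us \<le> \<gamma> ^ k" using alg3_bound[OF G D e run bad] unfolding k_def .
          hence "real (length us) \<le> real \<gamma> ^ k" using pw by (metis of_nat_mono)
          moreover have "real q = 2 * real (length us)" using inv(1) by simp
          moreover have "6 * real \<gamma> ^ (k + 1) \<le> real q" using A False by simp
          ultimately show False using big pk by linarith
        qed
      qed
    qed
  qed
qed

end
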